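(* Let $k\ge 1$ and let $G$ be a complete $k$-partite graph in which every partite set has at least $2$ vertices. Then $\rho_T(G)=k$.
   Context: Graphs are finite and simple. A complete $k$-partite graph is one whose vertex set is partitioned into $k$ nonempty independent sets (partite sets) such that two vertices are adjacent iff they lie in different partite sets. For $u,v\in(\mathbb{R}\cup\{\infty\})^k$ the min-plus tropical dot product is $u\odot v=\min_i(u_i+v_i)$. A min-plus $k$-tropical dot product representation of $G=(V,E)$ is a map $f:V\to(\mathbb{R}\cup\{\infty\})^k$ with a threshold $t>0$ such that for all distinct $x,y\in V$: $xy\in E$ iff $f(x)\odot f(y)\ge t$. $\rho_T(G)$ is the least $k\ge 1$ for which such a representation exists. *)

theory Defs
  imports "HOL-Analysis.Analysis" "HOL-Library.Extended_Real"
begin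

definition simple_graph :: "'a set \<Rightarrow> ('a \<Rightarrow> 'a \<Rightarrow> bool) \<Rightarrow> bool" where
  "simple_graph V E \<longleftrightarrow> finite V \<and> (\<forall>x\<in>V. \<forall>y\<in>V. E x y \<longleftrightarrow> E y x) \<and> (\<forall>x\<in>V. \<not> E x x)"

definition complete_multipartite_with ::
  "'a set \<Rightarrow> ('a \<Rightarrow> 'a \<Rightarrow> bool) \<Rightarrow> nat \<Rightarrow> 'a set set \<Rightarrow> bool" where
  "complete_multipartite_with V E k P \<longleftrightarrow>
     card P = k \<and> finite P \<and> (\<forall>A\<in>P. A \<noteq> {} \<and> A \<subseteq> V) \<and> \<Union>P = V \<and>
     (\<forall>A\<in>P. \<forall>B\<in>P. A \<noteq> B \<longrightarrow> A \<inter> B = {}) \<and>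
     (\<forall>x\<in>V. \<forall>y\<in>V. x \<noteq> y \<longrightarrow> (E x y \<longleftrightarrow> \<not> (\<exists>A\<in>P. x \<in> A \<and> y \<in> A)))"

text \<open>Vectors in (R \<union> {\<infinity>})^k are modelled as functions nat \<Rightarrow> ereal whose components
  with index < k are never -\<infinity> (components \<ge> k are irrelevant).\<close>
definition trop_dot :: "nat \<Rightarrow> (nat \<Rightarrow> ereal) \<Rightarrow> (nat \<Rightarrow> ereal) \<Rightarrow> ereal" where
  "trop_dot k u v = Min ((\<lambda>i. u i + v i) ` {..<k})"

definition trop_rep :: "'a set \<Rightarrow> ('a \<Rightarrow> 'a \<Rightarrow> bool) \<Rightarrow> nat \<Rightarrow> ('a \<Rightarrow> nat \<Rightarrow> ereal) \<Rightarrow> real \<Rightarrow> bool" where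
  "trop_rep V E k f t \<longleftrightarrow> t > 0 \<and> (\<forall>x\<in>V. \<forall>i<k. f x i \<noteq> -\<infinity>) \<and>
     (\<forall>x\<in>V. \<forall>y\<in>V. x \<noteq> y \<longrightarrow> (E x y \<longleftrightarrow> trop_dot k (f x) (f y) \<ge> ereal t))"

definition has_trop_rep :: "'a set \<Rightarrow> ('a \<Rightarrow> 'a \<Rightarrow> bool) \<Rightarrow> nat \<Rightarrow> bool" where
  "has_trop_rep V E k \<longleftrightarrow> (\<exists>f t. trop_rep V E k f t)"

definition rho_T :: "'a set \<Rightarrow> ('a \<Rightarrow> 'a \<Rightarrow> bool) \<Rightarrow> nat" where
  "rho_T V E = (LEAST k. k \<ge> 1 \<and> has_trop_rep V E k)"

end

theory Submission
  imports Defs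
begin

lemma ereal_contra:
  fixes a b c d :: ereal
  assumes "a \<noteq> -\<infinity>" "b \<noteq> -\<infinity>" "c \<noteq> -\<infinity>" "d \<noteq> -\<infinity>"
    "a + b < ereal t" "c + d < ereal t" "a + c \<ge> ereal t" "b + d \<ge> ereal t"
  shows False
  using assms by (cases a; cases b; cases c; cases d) auto

lemma upper:
  assumes "k \<ge> 1" and cm: "complete_multipartite_with V E k P"
  shows "has_trop_rep V E k"
proof -
  from cm have fin: "finite P" and cardP: "card P = k"
    and disj: "\<forall>A\<in>P. \<forall>B\<in>P. A \<noteq> B \<longrightarrow> A \<inter> B = {}"
    and un: "\<Union>P = V"
    and adj: "\<forall>x\<in>V. \<forall>y\<in>V. x \<noteq> y \<longrightarrow> (E x y \<longleftrightarrow> \<not> (\<exists>A\<in>P. x \<in> A \<and> y \<in> A))"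
    unfolding complete_multipartite_with_def by auto
  obtain g where g: "bij_betw g {0..<k} P" using ex_bij_betw_nat_finite[OF fin] cardP by auto
  have gim: "g ` {..<k} = P" using g by (simp add: bij_betw_def atLeast0LessThan)
  define f where "f x i = (if x \<in> g i then (0::ereal) else 1)" for x i
  have key: "trop_dot k (f x) (f y) \<ge> ereal 1 \<longleftrightarrow> \<not> (\<exists>A\<in>P. x \<in> A \<and> y \<in> A)" for x y
  proof -
    have ne: "(\<lambda>i. f x i + f y i) ` {..<k} \<noteq> {}" using assms(1) by (auto simp: lessThan_empty_iff)
    have "trop_dot k (f x) (f y) \<ge> ereal 1 \<longleftrightarrow> (\<forall>i<k. f x i + f y i \<ge> ereal 1)"
      unfolding trop_dot_def using ne by (auto simp: Min_ge_iff)
    also have "\<dots> \<longleftrightarrow> (\<forall>i<k. \<not> (x \<in> g i \<and> y \<in> g i))"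
      by (auto simp: f_def)
    also have "\<dots> \<longleftrightarrow> \<not> (\<exists>A\<in>P. x \<in> A \<and> y \<in> A)"
      using gim by auto
    finally show ?thesis .
  qed
  have "trop_rep V E k f 1"
    unfolding trop_rep_def using adj key by (auto simp: f_def)
  thus ?thesis unfolding has_trop_rep_def by blast
qed

lemma lower:
  assumes "1 \<le> m" "m < k" and cm: "complete_multipartite_with V E k P"
    and c2: "\<forall>A\<in>P. card A \<ge> 2"
  shows "\<not> has_trop_rep V E m"
proof
  assume "has_trop_rep V E m"
  then obtain f t where tr: "trop_rep V E m f t" unfolding has_trop_rep_def by blast
  from cm have fin: "finite P" and cardP: "card P = k"
    and disj: "\<forall>A\<in>P. \<forall>B\<in>P. A \<noteq> B \<longrightarrow> A \<inter> B = {}"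
    and sub: "\<forall>A\<in>P. A \<subseteq> V"
    and adj: "\<forall>x\<in>V. \<forall>y\<in>V. x \<noteq> y \<longrightarrow> (E x y \<longleftrightarrow> \<not> (\<exists>A\<in>P. x \<in> A \<and> y \<in> A))"
    unfolding complete_multipartite_with_def by auto
  from tr have ninf: "\<forall>x\<in>V. \<forall>i<m. f x i \<noteq> -\<infinity>"
    and rep: "\<forall>x\<in>V. \<forall>y\<in>V. x \<noteq> y \<longrightarrow> (E x y \<longleftrightarrow> trop_dot m (f x) (f y) \<ge> ereal t)"
    unfolding trop_rep_def by auto
  define W where "W A i \<longleftrightarrow> (\<exists>x\<in>A. \<exists>y\<in>A. x \<noteq> y \<and> f x i + f y i < ereal t)" for A i
  have ex: "\<exists>i<m. W A i" if A: "A \<in> P" for A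
  proof -
    have "card A \<ge> 2" using c2 A by auto
    then obtain x y where xy: "x \<in> A" "y \<in> A" "x \<noteq> y"
      by (metis One_nat_def card.infinite card_le_Suc0_iff_eq not_less_eq_eq numeral_2_eq_2 zero_less_numeral not_le)
    have "x \<in> V" "y \<in> V" using xy sub A by auto
    moreover have "\<not> E x y" using adj xy A \<open>x \<in> V\<close> \<open>y \<in> V\<close> by auto
    ultimately have "trop_dot m (f x) (f y) < ereal t" using rep xy by auto
    then obtain i where "i < m" "f x i + f y i < ereal t"
      unfolding trop_dot_def using assms(1) by (subst (asm) Min_less_iff) (auto simp: lessThan_empty_iff)
    thus ?thesis using xy unfolding W_def by blast
  qed
  define c where "c A = (SOME i. i < m \<and> W A i)" for A
  have c: "c A < m \<and> W A (c A)" if "A \<in> P" for A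
    unfolding c_def using someI_ex[OF ex[OF that]] by blast
  have "\<not> inj_on c P"
  proof
    assume "inj_on c P"
    moreover have "c ` P \<subseteq> {..<m}" using c by auto
    ultimately have "card P \<le> card {..<m}" using card_inj_on_le by blast
    thus False using cardP assms(2) by simp
  qed
  then obtain A B where AB: "A \<in> P" "B \<in> P" "A \<noteq> B" "c A = c B"
    unfolding inj_on_def by blast
  define i where "i = c A"
  have im: "i < m" using c AB i_def by auto
  obtain x y where xy: "x \<in> A" "y \<in> A" "x \<noteq> y" "f x i + f y i < ereal t"
    using c[OF AB(1)] unfolding W_def i_def by blast
  obtain u v where uv: "u \<in> B" "v \<in> B" "u \<noteq> v" "f u i + f v i < ereal t"
    using c[OF AB(2)] unfolding W_def i_def AB(4) by blast
  have cross: "f p i + f q i \<ge> ereal t" if p: "p \<in> A" and q: "q \<in> B" for p q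
  proof -
    have pq: "p \<in> V" "q \<in> V" using p q sub AB by auto
    have "p \<noteq> q" using p q disj AB by blast
    moreover have "\<not> (\<exists>C\<in>P. p \<in> C \<and> q \<in> C)"
    proof
      assume "\<exists>C\<in>P. p \<in> C \<and> q \<in> C"
      then obtain C where C: "C \<in> P" "p \<in> C" "q \<in> C" by blast
      have "C = A" using disj C p AB by blast
      moreover have "C = B" using disj C q AB by blast
      ultimately show False using AB by simp
    qed
    ultimately have "trop_dot m (f p) (f q) \<ge> ereal t" using adj rep pq by blast
    moreover have "trop_dot m (f p) (f q) \<le> f p i + f q i"
      unfolding trop_dot_def using im by (intro Min_le) auto
    ultimately show ?thesis by simp
  qed
  have "x \<in> V" "y \<in> V" "u \<in> V" "v \<in> V" using xy uv sub AB by auto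
  hence "f x i \<noteq> -\<infinity>" "f y i \<noteq> -\<infinity>" "f u i \<noteq> -\<infinity>" "f v i \<noteq> -\<infinity>" using ninf im by auto
  thus False
    using ereal_contra[of "f x i" "f y i" "f u i" "f v i" t] xy uv cross[of x u] cross[of y v]
    by (simp add: add.commute add.left_commute)
qed

theorem mainTheorem14:
  fixes V :: "'a set" and E :: "'a \<Rightarrow> 'a \<Rightarrow> bool" and k :: nat and P :: "'a set set"
  assumes "k \<ge> 1"
    and "simple_graph V E"
    and "complete_multipartite_with V E k P"
    and "\<forall>A\<in>P. card A \<ge> 2"
  shows "rho_T V E = k"
  unfolding rho_T_def
proof (rule Least_equality)
  show "1 \<le> k \<and> has_trop_rep V E k" using upper assms by blast
next
  fix m assume "1 \<le> m \<and> has_trop_rep V E m"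
  thus "k \<le> m" using lower[of m k V E P] assms by (meson not_le)
qed

end
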